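(* Let $p$ be an odd prime, $n$ an odd integer, and let $r,t$ and $v,w$ be pairs of integers satisfying $\gcd(n,r+t)=\gcd(n,r-t)=\gcd(n,p)=1$ and $\gcd(n,v+w)=\gcd(n,v-w)=1$. Let $u$ be a primitive $n$-th root of unity in an extension of $\mathbb{F}_p$, and set $\lambda_j^{(r,t)}=u^{(n-r)j}-u^{(n-t)j}$ for $j=0,\ldots,n-1$. Then \[\prod_{j=1}^{n-1}\lambda_j^{(r,t)}=\prod_{j=1}^{n-1}\lambda_j^{(v,w)}.\] *)

theory Defs
  imports "HOL-Computational_Algebra.Primes"
begin

definition primitive_root_of_unity :: "nat \<Rightarrow> 'a::field \<Rightarrow> bool" where
  "primitive_root_of_unity n u \<longleftrightarrow> 0 < n \<and> u ^ n = 1 \<and> (\<forall>k. 0 < k \<and> k < n \<longrightarrow> u ^ k \<noteq> 1)"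

definition lam :: "nat \<Rightarrow> 'a::field \<Rightarrow> int \<Rightarrow> int \<Rightarrow> nat \<Rightarrow> 'a" where
  "lam n u r t j = u powi ((int n - r) * int j) - u powi ((int n - t) * int j)"

end

theory Submission
  imports Defs "HOL-Number_Theory.Cong"
begin

lemma powi_mod:
  fixes u :: "'a::field"
  assumes "u ^ n = 1" "n > 0"
  shows "u powi k = u ^ nat (k mod int n)"
proof -
  have u0: "u \<noteq> 0" using assms by (cases n) auto
  have "u powi k = u powi (int n * (k div int n) + k mod int n)" by simp
  also have "\<dots> = u powi (int n * (k div int n)) * u powi (k mod int n)"
    by (rule power_int_add) (use u0 in auto)
  also have "u powi (int n * (k div int n)) = 1"
    by (simp add: power_int_mult assms(1))
  also have "u powi (k mod int n) = u ^ nat (k mod int n)"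
    using assms(2) by (metis power_int_of_nat int_nat_eq pos_mod_sign of_nat_0_less_iff)
  finally show ?thesis by simp
qed

lemma prod_powi:
  fixes u :: "'a::field"
  assumes "u \<noteq> 0" "finite A"
  shows "(\<Prod>j\<in>A. u powi f j) = u powi (\<Sum>j\<in>A. f j)"
  using assms(2) by (induction A rule: finite_induct) (auto simp: power_int_add assms(1))

lemma main:
  fixes u :: "'a::field" and n :: nat and r t :: int
  assumes "odd n" "gcd (int n) (r - t) = 1" "u ^ n = 1"
  shows "(\<Prod>j=1..n-1. lam n u r t j) = (\<Prod>j=1..n-1. u ^ j - 1)"
proof -
  have n0: "n > 0" using assms(1) by (cases n) auto
  have u0: "u \<noteq> 0" using assms n0 by (cases n) auto
  define d where "d = t - r"
  have cop: "coprime d (int n)" using assms(2) unfolding d_def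
    by (metis coprime_iff_gcd_eq_1 coprime_commute coprime_minus_right_iff minus_diff_eq)
  have step1: "lam n u r t j = u powi (- t * int j) * (u powi (d * int j) - 1)" for j
  proof -
    have "u powi ((int n - r) * int j) = u powi ((- t * int j + d * int j) + int n * int j)"
      by (simp add: d_def algebra_simps)
    also have "\<dots> = u powi (- t * int j + d * int j) * u powi (int n * int j)"
      by (rule power_int_add) (use u0 in auto)
    also have "u powi (- t * int j + d * int j) = u powi (- t * int j) * u powi (d * int j)"
      by (rule power_int_add) (use u0 in auto)
    also have "u powi (int n * int j) = 1" by (simp add: power_int_mult assms(3))
    finally have a: "u powi ((int n - r) * int j) = u powi (- t * int j) * u powi (d * int j)" by simp
    have "u powi ((int n - t) * int j) = u powi (- t * int j + int n * int j)"
      by (simp add: algebra_simps)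
    also have "\<dots> = u powi (- t * int j) * u powi (int n * int j)"
      by (rule power_int_add) (use u0 in auto)
    also have "\<dots> = u powi (- t * int j)"
      by (simp add: power_int_mult assms(3))
    finally show ?thesis unfolding lam_def a by (simp add: algebra_simps)
  qed
  have "(\<Prod>j=1..n-1. lam n u r t j) =
        (\<Prod>j=1..n-1. u powi (- t * int j)) * (\<Prod>j=1..n-1. u powi (d * int j) - 1)"
    by (simp add: step1 prod.distrib)
  also have "(\<Prod>j=1..n-1. u powi (- t * int j)) = 1"
  proof -
    have "(\<Prod>j=1..n-1. u powi (- t * int j)) = u powi (\<Sum>j=1..n-1. - t * int j)"
      by (rule prod_powi[OF u0]) simp
    also have "(\<Sum>j=1..n-1. - t * int j) = - t * int (\<Sum>j=1..n-1. j)"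
      by (simp add: sum_distrib_left)
    also have "(\<Sum>j=1..n-1. j) = n * ((n - 1) div 2)"
    proof -
      obtain m where n: "n = 2 * m + 1" using assms(1) by (rule oddE)
      have "2 * (\<Sum>j=Suc 0..2*m. of_nat j) = (of_nat (2*m) * (of_nat (2*m) + 1) :: nat)"
        by (rule double_gauss_sum_from_Suc_0)
      then have "2 * (\<Sum>j=Suc 0..2*m. j) = 2 * (m * (2 * m + 1))" by simp
      then have "(\<Sum>j=Suc 0..2*m. j) = m * (2 * m + 1)" by linarith
      then show ?thesis using n by simp
    qed
    also have "- t * int (n * ((n - 1) div 2)) = int n * (- t * int ((n - 1) div 2))"
      by (simp add: algebra_simps)
    also have "u powi (int n * (- t * int ((n - 1) div 2))) = 1"
      by (simp only: power_int_mult power_int_of_nat assms(3) power_int_1_left power_one)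
    finally show ?thesis .
  qed
  also have "(\<Prod>j=1..n-1. u powi (d * int j) - 1) = (\<Prod>j=1..n-1. u ^ (nat ((d * int j) mod int n)) - 1)"
    using powi_mod[OF assms(3) n0] by simp
  also have "\<dots> = (\<Prod>j=1..n-1. u ^ j - 1)"
  proof -
    define h where "h j = nat ((d * int j) mod int n)" for j
    have into: "h ` {1..n-1} \<subseteq> {1..n-1}"
    proof
      fix x assume "x \<in> h ` {1..n-1}"
      then obtain j where j: "j \<in> {1..n-1}" "x = h j" by auto
      have "\<not> int n dvd d * int j"
      proof
        assume "int n dvd d * int j"
        then have "int n dvd int j" using cop
          by (metis coprime_commute coprime_dvd_mult_right_iff)
        then have "n dvd j" by simp
        then show False using j by (auto dest: dvd_imp_le)
      qed
      then have "(d * int j) mod int n \<noteq> 0" by auto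
      moreover have "(d * int j) mod int n < int n" "0 \<le> (d * int j) mod int n" using n0 by auto
      moreover have "int (h j) = (d * int j) mod int n" unfolding h_def using n0 by simp
      ultimately have "1 \<le> h j" "h j < n" by linarith+
      then show "x \<in> {1..n-1}" using j by auto
    qed
    have inj: "inj_on h {1..n-1}"
    proof
      fix a b assume ab: "a \<in> {1..n-1}" "b \<in> {1..n-1}" "h a = h b"
      have "0 \<le> (d * int a) mod int n" "0 \<le> (d * int b) mod int n" using n0 by simp_all
      then have "(d * int a) mod int n = (d * int b) mod int n"
        using ab(3) unfolding h_def by (metis nat_eq_iff2)
      then have "[d * int a = d * int b] (mod int n)" by (simp add: cong_def)
      then have "[int a = int b] (mod int n)" using cong_mult_lcancel[OF cop] by simp
      then have "[a = b] (mod n)" by (simp add: cong_int_iff)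
      then show "a = b" using ab cong_less_modulus_unique_nat[of a b n] by auto
    qed
    have "h ` {1..n-1} = {1..n-1}" using endo_inj_surj[OF _ into inj] by simp
    then have bij: "bij_betw h {1..n-1} {1..n-1}" using inj by (simp add: bij_betw_def)
    show ?thesis unfolding h_def[symmetric]
      using prod.reindex_bij_betw[OF bij, of "\<lambda>j. u ^ j - 1"] by simp
  qed
  finally show ?thesis by simp
qed

theorem lemma3:
  fixes u :: "'a::field" and p n :: nat and r t v w :: int
  assumes "prime p" and "odd p" and "CHAR('a) = p"
    and "odd n"
    and "gcd (int n) (r + t) = 1" and "gcd (int n) (r - t) = 1" and "gcd n p = 1"
    and "gcd (int n) (v + w) = 1" and "gcd (int n) (v - w) = 1"
    and "primitive_root_of_unity n u"
  shows "(\<Prod>j=1..n-1. lam n u r t j) = (\<Prod>j=1..n-1. lam n u v w j)"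
proof -
  have "u ^ n = 1" using assms(10) unfolding primitive_root_of_unity_def by simp
  then show ?thesis using main[OF assms(4) assms(6), of u] main[OF assms(4) assms(9), of u] by simp
qed

end
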